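(* Let $S$ be a numerical semigroup with $\mathrm{g}(S)=g\ge 1$ and $\mathrm{m}(S)=a$. Let $q=\lfloor g/a\rfloor$ and $r=g-aq$. Then $S$ is reflective if and only if $a\in\{2,3,\dots,g+1\}$, $a\nmid g$, and \[ S=\langle A\rangle \quad\text{for}\quad A=\{a,\ 2g+a-r\}\cup\{g+1,g+2,\dots,g+(a-1)\}. \]
   Context: A numerical semigroup is a submonoid $S$ of $(\mathbb{N}_0,+)$ with finite complement. Its set of gaps is $\mathrm{H}(S)=\mathbb{N}_0\setminus S$, its genus is $\mathrm{g}(S)=\#\mathrm{H}(S)$, its Frobenius number (when $\mathrm{g}(S)\ge1$) is $\mathrm{F}(S)=\max \mathrm{H}(S)$, and its multiplicity $\mathrm{m}(S)$ is the smallest positive element of $S$. For $A\subseteq\mathbb{N}_0$, $\langle A\rangle$ denotes the set of all finite $\mathbb{N}_0$-linear combinations of elements of $A$. A numerical semigroup $S$ of genus $g\ge1$ is called reflective if for every $z\in\{0,1,\dots,g-1\}$ exactly one of $z$ and $z+g$ belongs to $S$. *)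

theory Defs
  imports Main
begin

definition numerical_semigroup :: "nat set \<Rightarrow> bool" where
  "numerical_semigroup S \<longleftrightarrow> 0 \<in> S \<and> (\<forall>x\<in>S. \<forall>y\<in>S. x + y \<in> S) \<and> finite (UNIV - S)"

definition gaps :: "nat set \<Rightarrow> nat set" where
  "gaps S = UNIV - S"

definition genus :: "nat set \<Rightarrow> nat" where
  "genus S = card (gaps S)"

definition multiplicity :: "nat set \<Rightarrow> nat" where
  "multiplicity S = (LEAST x. x \<in> S \<and> 0 < x)"

inductive_set generated :: "nat set \<Rightarrow> nat set" for A :: "nat set" where
  gen_zero: "0 \<in> generated A"
| gen_add: "a \<in> A \<Longrightarrow> x \<in> generated A \<Longrightarrow> a + x \<in> generated A"

definition reflective :: "nat set \<Rightarrow> bool" where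
  "reflective S \<longleftrightarrow> 1 \<le> genus S \<and>
     (\<forall>z < genus S. (z \<in> S) \<noteq> (z + genus S \<in> S))"

end

theory Submission
  imports Defs
begin

definition RR :: "nat \<Rightarrow> nat \<Rightarrow> nat set" where
  "RR a g = {n. (n < g \<and> a dvd n) \<or> (g \<le> n \<and> n < 2*g \<and> \<not> a dvd (n - g)) \<or> 2*g \<le> n}"

lemma gen_mult:
  assumes "a \<in> A" "x \<in> generated A"
  shows "k*a + x \<in> generated A"
proof (induction k)
  case 0 then show ?case using assms by simp
next
  case (Suc k)
  have "a + (k*a + x) \<in> generated A" using assms(1) Suc by (rule gen_add)
  then show ?case by (simp add: add.assoc)
qed

lemma RR_closed:
  assumes "\<not> a dvd g" "x \<in> RR a g" "y \<in> RR a g"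
  shows "x + y \<in> RR a g"
proof -
  have "\<not> a dvd (x + y - g)" if "x < g" "y < g" "a dvd x" "a dvd y" "g \<le> x + y"
  proof
    assume h: "a dvd (x + y - g)"
    have "a dvd (x+y)" using that by simp
    then have "a dvd (x + y - (x + y - g))" using h dvd_diff_nat by blast
    moreover have "x + y - (x + y - g) = g" using that by simp
    ultimately show False using assms(1) by simp
  qed
  moreover have "\<not> a dvd (x + y - g)" if "x < g" "a dvd x" "g \<le> y" "\<not> a dvd (y - g)"
  proof
    assume h: "a dvd (x + y - g)"
    have "x + y - g - x = y - g" using that by simp
    then show False using h that dvd_diff_nat by metis
  qed
  moreover have "\<not> a dvd (x + y - g)" if "y < g" "a dvd y" "g \<le> x" "\<not> a dvd (x - g)"
  proof
    assume h: "a dvd (x + y - g)"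
    have "x + y - g - y = x - g" using that by simp
    then show False using h that dvd_diff_nat by metis
  qed
  ultimately show ?thesis using assms(2,3) unfolding RR_def by auto
qed

lemma gen_RR:
  assumes "2 \<le> a" "a \<le> g+1" "\<not> a dvd g"
  shows "generated ({a, 2*g + a - g mod a} \<union> {g+1..g+(a-1)}) = RR a g"
    (is "generated ?A = _")
proof
  have AR: "?A \<subseteq> RR a g"
  proof
    fix x assume "x \<in> ?A"
    moreover have "a \<in> RR a g"
    proof (cases "a < g")
      case True then show ?thesis by (simp add: RR_def)
    next
      case False
      then have "a = g \<or> a = g + 1" using assms by auto
      then show ?thesis
      proof
        assume "a = g" then show ?thesis using assms by simp
      next
        assume e: "a = g + 1"
        then have "\<not> a dvd 1" using assms by auto
        then show ?thesis using e by (auto simp: RR_def)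
      qed
    qed
    moreover have "2*g + a - g mod a \<in> RR a g"
    proof -
      have "g mod a < a" using assms by simp
      then have "2*g \<le> 2*g + a - g mod a" by linarith
      then show ?thesis by (simp add: RR_def)
    qed
    moreover have "g + j \<in> RR a g" if "1 \<le> j" "j \<le> a - 1" for j
    proof -
      have "\<not> a dvd j" using that assms by (auto dest: dvd_imp_le)
      then show ?thesis by (auto simp: RR_def)
    qed
    moreover have "x = a \<or> x = 2*g + a - g mod a \<or> (g+1 \<le> x \<and> x \<le> g+(a-1))"
      using \<open>x \<in> ?A\<close> by auto
    ultimately show "x \<in> RR a g"
    proof (elim disjE)
      assume "g+1 \<le> x \<and> x \<le> g+(a-1)"
      then have "1 \<le> x - g" "x - g \<le> a - 1" by auto
      then have "g + (x - g) \<in> RR a g"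
        using \<open>\<And>j. 1 \<le> j \<Longrightarrow> j \<le> a - 1 \<Longrightarrow> g + j \<in> RR a g\<close> by blast
      then show ?thesis using \<open>g+1 \<le> x \<and> x \<le> g+(a-1)\<close> by simp
    qed simp_all
  qed
  show "generated ?A \<subseteq> RR a g"
  proof
    fix x assume "x \<in> generated ?A"
    then show "x \<in> RR a g"
    proof induction
      case gen_zero then show ?case using assms by (simp add: RR_def)
    next
      case (gen_add b x) then show ?case using AR RR_closed assms(3) by blast
    qed
  qed
  have aA: "a \<in> ?A" by simp
  have g0: "0 \<in> generated ?A" by (rule gen_zero)
  have gj: "g + j \<in> generated ?A" if "0 < j" "j < a" for j
  proof -
    have "g + j \<in> ?A" using that by auto
    then have "g + j + 0 \<in> generated ?A" using g0 by (rule gen_add)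
    then show ?thesis by simp
  qed
  have nd: "g + z \<in> generated ?A" if "\<not> a dvd z" for z
  proof -
    have j: "0 < z mod a" "z mod a < a" using that assms by (auto) (metis dvd_eq_mod_eq_0 gr0I)
    have "(z div a) * a + (g + z mod a) \<in> generated ?A"
      using gen_mult[OF aA gj[OF j]] .
    moreover have "(z div a) * a + (g + z mod a) = g + z" by simp
    ultimately show ?thesis by simp
  qed
  show "RR a g \<subseteq> generated ?A"
  proof
    fix n assume n: "n \<in> RR a g"
    show "n \<in> generated ?A"
    proof (cases "n < g")
      case True
      then have "a dvd n" using n by (auto simp: RR_def)
      then obtain k where "n = k * a" by (metis dvd_def mult.commute)
      then show ?thesis using gen_mult[OF aA g0, of k] by simp
    next
      case False
      define z where "z = n - g"
      have nz: "n = g + z" using False z_def by simp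
      show ?thesis
      proof (cases "a dvd z")
        case False then show ?thesis using nd nz by simp
      next
        case True
        then have "2*g \<le> n" using n nz by (auto simp: RR_def)
        then have zg: "g \<le> z" using nz by simp
        obtain k where k: "z = a * k" using True by (auto elim: dvdE)
        let ?q = "g div a"
        have gq: "g = a * ?q + g mod a" by simp
        have "g mod a > 0" using assms(3) by (metis dvd_eq_mod_eq_0 gr0I)
        have "?q < k"
        proof (rule ccontr)
          assume "\<not> ?q < k"
          then have "a * k \<le> a * ?q" by simp
          then show False using zg k gq \<open>g mod a > 0\<close> by linarith
        qed
        define m where "m = k - ?q - 1"
        have m: "k = ?q + 1 + m" using \<open>?q < k\<close> by (simp add: m_def)
        define Q where "Q = ?q"
        define R where "R = g mod a"
        have gQ: "g = a * Q + R" unfolding Q_def R_def by simp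
        have "R < a" unfolding R_def using assms by simp
        then have e0: "2*g + a - R = g + a * (Q + 1)" using gQ by (simp add: algebra_simps)
        have e: "2*g + a - g mod a = g + a * (?q + 1)" using e0 unfolding Q_def R_def .
        have "2*g + a - g mod a \<in> ?A" by simp
        then have "2*g + a - g mod a + 0 \<in> generated ?A" using g0 by (rule gen_add)
        then have "m * a + (g + a * (?q + 1)) \<in> generated ?A" using gen_mult[OF aA] e by simp
        moreover have "m * a + (g + a * (?q + 1)) = n" using nz k m by (simp add: algebra_simps)
        ultimately show ?thesis by simp
      qed
    qed
  qed
qed

lemma ns_mult:
  assumes "numerical_semigroup S" "a \<in> S"
  shows "k * a \<in> S"
  using assms by (induction k) (auto simp: numerical_semigroup_def)

theorem mainTheorem1:
  fixes S :: "nat set" and g a q r :: nat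
  assumes "numerical_semigroup S"
    and "genus S = g" and "g \<ge> 1"
    and "multiplicity S = a"
    and "q = g div a" and "r = g - a * q"
  shows "reflective S \<longleftrightarrow>
     (a \<in> {2..g+1} \<and> \<not> a dvd g \<and>
      S = generated ({a, 2*g + a - r} \<union> {g+1..g+(a-1)}))"
proof -
  have r: "r = g mod a" using assms(5,6) by (simp add: minus_mult_div_eq_mod mult.commute)
  have NS: "0 \<in> S" "\<And>x y. x \<in> S \<Longrightarrow> y \<in> S \<Longrightarrow> x + y \<in> S" "finite (gaps S)"
    using assms(1) by (auto simp: numerical_semigroup_def gaps_def)
  show ?thesis
  proof
    assume refl: "reflective S"
    have rf: "\<And>z. z < g \<Longrightarrow> (z \<in> S) \<noteq> (z + g \<in> S)"
      using refl assms(2) by (auto simp: reflective_def)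
    have gS: "g \<notin> S" using rf[of 0] assms(3) NS(1) by simp
    have big: "n \<in> S" if "2*g \<le> n" for n
    proof (rule ccontr)
      assume nS: "n \<notin> S"
      define f where "f z = (if z \<in> S then z + g else z)" for z
      have inj: "inj_on f {..<g}" unfolding inj_on_def f_def by auto
      have sub: "f ` {..<g} \<subseteq> gaps S"
        using rf by (auto simp: f_def gaps_def)
      have "card (f ` {..<g}) = card (gaps S)" using card_image[OF inj] assms(2)
        by (simp add: genus_def)
      then have "f ` {..<g} = gaps S" using card_subset_eq[OF NS(3) sub] by simp
      moreover have "n \<in> gaps S" using nS by (simp add: gaps_def)
      ultimately obtain z where "z < g" "n = f z" by auto
      then show False using that by (auto simp: f_def split: if_splits)
    qed
    have ex: "\<exists>x. x \<in> S \<and> 0 < x" using big[of "2*g"] assms(3) by auto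
    have aS: "a \<in> S \<and> 0 < a" using LeastI_ex[OF ex] assms(4) by (simp add: multiplicity_def)
    have below: "n \<notin> S" if "0 < n" "n < a" for n
      using not_less_Least[of n "\<lambda>x. x \<in> S \<and> 0 < x"] that assms(4)
      by (auto simp: multiplicity_def)
    have low: "n \<in> S \<longleftrightarrow> a dvd n" if "n < g" for n
    proof
      assume nS: "n \<in> S"
      show "a dvd n"
      proof (rule ccontr)
        assume nd: "\<not> a dvd n"
        define t where "t = n mod a"
        have t: "0 < t" "t < a" using nd aS by (auto simp: t_def) (metis dvd_eq_mod_eq_0 gr0I)
        have "t \<le> n" by (simp add: t_def)
        then have "t < g" using that by simp
        have "t \<notin> S" using below t by simp
        then have tg: "t + g \<in> S" using rf[OF \<open>t < g\<close>] by simp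
        have "(n div a) * a \<in> S" using ns_mult[OF assms(1)] aS by simp
        then have "(n div a) * a + (t + g) \<in> S" using NS(2) tg by blast
        moreover have "(n div a) * a + (t + g) = n + g" by (simp add: t_def)
        ultimately show False using rf[OF that] nS by simp
      qed
    next
      assume "a dvd n"
      then obtain k where "n = k * a" by (metis dvd_def mult.commute)
      then show "n \<in> S" using ns_mult[OF assms(1)] aS by simp
    qed
    have mid: "n \<in> S \<longleftrightarrow> \<not> a dvd (n - g)" if "g \<le> n" "n < 2*g" for n
    proof -
      have "n - g < g" using that by simp
      from rf[OF this] low[OF this] show ?thesis using that by simp
    qed
    have SR: "S = RR a g"
    proof (rule set_eqI)
      fix n show "n \<in> S \<longleftrightarrow> n \<in> RR a g"
        using low mid big by (cases "n < g"; cases "n < 2*g") (auto simp: RR_def)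
    qed
    have nd: "\<not> a dvd g"
    proof
      assume "a dvd g"
      then obtain k where "g = k * a" by (metis dvd_def mult.commute)
      then show False using ns_mult[OF assms(1)] aS gS by metis
    qed
    have a2: "2 \<le> a" using aS nd by (cases "a = 1") auto
    have "g + 1 \<in> S"
    proof (cases "g = 1")
      case True then show ?thesis using big by simp
    next
      case False
      then have "g + 1 < 2 * g" using assms(3) by simp
      moreover have "\<not> a dvd 1" using a2 by auto
      ultimately show ?thesis using mid[of "g+1"] by simp
    qed
    then have "a \<le> g + 1" using below[of "g+1"] by force
    then show "a \<in> {2..g+1} \<and> \<not> a dvd g \<and>
      S = generated ({a, 2*g + a - r} \<union> {g+1..g+(a-1)})"
      using a2 nd SR gen_RR r by simp
  next
    assume h: "a \<in> {2..g+1} \<and> \<not> a dvd g \<and>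
      S = generated ({a, 2*g + a - r} \<union> {g+1..g+(a-1)})"
    then have SR: "S = RR a g" using gen_RR r by simp
    have "\<forall>z<g. (z \<in> RR a g) \<noteq> (z + g \<in> RR a g)" by (auto simp: RR_def)
    then show "reflective S" unfolding reflective_def using assms(2,3) SR by simp
  qed
qed

end
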